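(* Consider the $N$-node uplink system described in the context, initialized with $d_{0,i}=D_{0,i}=1$ for all $i$ (so the AP's initial belief of each local age is the point mass at $1$), and operated under an arbitrary scheduling policy. Then for every slot $t\ge 1$ and every node $i$ there exist positive integers $k,m$ such that $D_{t,i}=k+m$ and the AP's belief $\bm{b}_{t,i}$ of the local age of node $i$ equals $\bm{c}_i(k,m)$, where $\bm{c}_i(k,m)=[c(d)]_{d\ge1}$ is defined by $c(d)=\lambda_i(1-\lambda_i)^{d-1}$ for $1\le d\le m$, $c(k+m)=(1-\lambda_i)^m$, and $c(d)=0$ for all other $d\ge 1$.
   Context: System: $N$ nodes $i=1,\dots,N$ and one access point (AP); time slots $t=0,1,2,\dots$. Node $i$ receives a status update in each slot independently with probability $\lambda_i\in(0,1]$ (independent across nodes and slots) and keeps only the latest one. Local age: $d_{t+1,i}=1$ if an update arrives at node $i$ in slot $t$, else $d_{t+1,i}=d_{t,i}+1$. In each slot the AP schedules at most one node; a scheduled node $i$'s transmission succeeds with probability $p_i\in(0,1]$ independently. If node $i$ is scheduled and succeeds in slot $t$, the AP observes $d_{t,i}$ and $D_{t+1,i}=d_{t,i}+1$; otherwise the AP observes nothing about $d_{t,i}$ and $D_{t+1,i}=D_{t,i}+1$. A scheduling policy chooses the action in each slot as a function of the AP's past actions and observations. The belief $\bm{b}_{t,i}=[b_{t,i}(d)]_{d\ge1}$ is the conditional distribution $b_{t,i}(d)=\Pr(d_{t,i}=d\mid \text{AP history of actions and observations up to slot } t-1)$; $D_{t,i}$ is known to the AP. *)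

theory Defs
  imports Complex_Main "HOL-Library.FuncSet"
begin

text \<open>A configuration w assigns to each (slot s, node i) a pair
  (arrival bit, success bit): fst (w (s,i)) = an update arrives at node i in slot s
  (prob lam i), snd (w (s,i)) = a transmission of node i in slot s would succeed (prob p i). Histories are lists of (action, observation) pairs; an action is
  None (idle) or Some j (schedule node j); an observation is None or Some (local age).\<close>

type_synonym config = "nat \<times> nat \<Rightarrow> bool \<times> bool"
type_synonym history = "(nat option \<times> nat option) list"
type_synonym policy = "history \<Rightarrow> nat option"

fun dloc :: "config \<Rightarrow> nat \<Rightarrow> nat \<Rightarrow> nat" where
  "dloc w i 0 = 1"
| "dloc w i (Suc s) = (if fst (w (s, i)) then 1 else Suc (dloc w i s))"

fun hist :: "policy \<Rightarrow> config \<Rightarrow> nat \<Rightarrow> history" where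
  "hist pol w 0 = []"
| "hist pol w (Suc s) =
     (let u = pol (hist pol w s) in
        hist pol w s @ [(u, case u of None \<Rightarrow> None
                                   | Some j \<Rightarrow> (if snd (w (s, j)) then Some (dloc w j s) else None))])"

fun Dap :: "policy \<Rightarrow> config \<Rightarrow> nat \<Rightarrow> nat \<Rightarrow> nat" where
  "Dap pol w i 0 = 1"
| "Dap pol w i (Suc s) =
     (if pol (hist pol w s) = Some i \<and> snd (w (s, i)) then Suc (dloc w i s)
      else Suc (Dap pol w i s))"

definition omega :: "nat \<Rightarrow> nat \<Rightarrow> config set" where
  "omega N t = PiE ({..<t} \<times> {1..N}) (\<lambda>_. UNIV)"

definition weight :: "nat \<Rightarrow> (nat \<Rightarrow> real) \<Rightarrow> (nat \<Rightarrow> real) \<Rightarrow> nat \<Rightarrow> config \<Rightarrow> real" where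
  "weight N lam p t w =
     (\<Prod>s<t. \<Prod>i\<in>{1..N}. (if fst (w (s, i)) then lam i else 1 - lam i)
                          * (if snd (w (s, i)) then p i else 1 - p i))"

definition prob_ev :: "nat \<Rightarrow> (nat \<Rightarrow> real) \<Rightarrow> (nat \<Rightarrow> real) \<Rightarrow> nat \<Rightarrow> (config \<Rightarrow> bool) \<Rightarrow> real" where
  "prob_ev N lam p t E = (\<Sum>w\<in>omega N t. if E w then weight N lam p t w else 0)"

definition belief :: "nat \<Rightarrow> (nat \<Rightarrow> real) \<Rightarrow> (nat \<Rightarrow> real) \<Rightarrow> policy \<Rightarrow> nat \<Rightarrow> nat \<Rightarrow> history \<Rightarrow> nat \<Rightarrow> real" where
  "belief N lam p pol t i h d =
     prob_ev N lam p t (\<lambda>w. dloc w i t = d \<and> hist pol w t = h)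
     / prob_ev N lam p t (\<lambda>w. hist pol w t = h)"

definition cvec :: "(nat \<Rightarrow> real) \<Rightarrow> nat \<Rightarrow> nat \<Rightarrow> nat \<Rightarrow> nat \<Rightarrow> real" where
  "cvec lam i k m d =
     (if 1 \<le> d \<and> d \<le> m then lam i * (1 - lam i) ^ (d - 1)
      else if d = k + m then (1 - lam i) ^ m else 0)"

end

theory Submission imports Defs begin

definition fw :: "(nat \<Rightarrow> real) \<Rightarrow> (nat \<Rightarrow> real) \<Rightarrow> nat \<Rightarrow> bool \<times> bool \<Rightarrow> real" where
  "fw lam p j a = (if fst a then lam j else 1 - lam j) * (if snd a then p j else 1 - p j)"
definition SS :: "nat set \<Rightarrow> (nat \<Rightarrow> bool \<times> bool) set" where
  "SS A = PiE A (\<lambda>_. UNIV)"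
definition sw :: "nat set \<Rightarrow> (nat \<Rightarrow> real) \<Rightarrow> (nat \<Rightarrow> real) \<Rightarrow> (nat \<Rightarrow> bool \<times> bool) \<Rightarrow> real" where
  "sw A lam p v = (\<Prod>j\<in>A. fw lam p j (v j))"
definition merge :: "nat \<Rightarrow> config \<Rightarrow> (nat \<Rightarrow> bool \<times> bool) \<Rightarrow> config" where
  "merge t w v = (\<lambda>(r,j). if r = t then v j else w (r,j))"

lemma weight_Suc_merge:
  "weight N lam p (Suc t) (merge t w v) = weight N lam p t w * sw {1..N} lam p v"
proof -
  have "(\<Prod>s<t. \<Prod>i\<in>{1..N}. (if fst (merge t w v (s, i)) then lam i else 1 - lam i)
                          * (if snd (merge t w v (s, i)) then p i else 1 - p i))
       = (\<Prod>s<t. \<Prod>i\<in>{1..N}. (if fst (w (s, i)) then lam i else 1 - lam i)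
                          * (if snd (w (s, i)) then p i else 1 - p i))"
    by (rule prod.cong) (auto simp: merge_def)
  then show ?thesis unfolding weight_def sw_def fw_def
    by (simp add: prod.lessThan_Suc merge_def)
qed

lemma finite_omega: "finite (omega N t)"
  unfolding omega_def by (intro finite_PiE) auto

lemma finite_SS: "finite A \<Longrightarrow> finite (SS A)"
  unfolding SS_def by (intro finite_PiE) auto

lemma bij_merge:
  "bij_betw (\<lambda>(w,v). merge t w v) (omega N t \<times> SS {1..N}) (omega N (Suc t))"
proof (rule bij_betw_byWitness[where f'="\<lambda>w'. (\<lambda>(r,j). if r = t then undefined else w' (r,j),
          \<lambda>j. if j \<in> {1..N} then w' (t,j) else undefined)"])
  show "\<forall>a\<in>omega N t \<times> SS {1..N}.
       (\<lambda>w'. (\<lambda>(r, j). if r = t then undefined else w' (r, j), \<lambda>j. if j \<in> {1..N} then w' (t, j) else undefined))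
        ((\<lambda>(w, v). merge t w v) a) = a"
  proof
    fix a assume a: "a \<in> omega N t \<times> SS {1..N}"
    obtain w v where av: "a = (w,v)" by (cases a)
    have w: "w \<in> omega N t" and v: "v \<in> SS {1..N}" using a av by auto
    have "(\<lambda>(r, j). if r = t then undefined else merge t w v (r, j)) = w"
    proof (rule ext, clarify)
      fix r j show "(if r = t then undefined else merge t w v (r, j)) = w (r,j)"
        using w by (auto simp: merge_def omega_def PiE_def extensional_def)
    qed
    moreover have "(\<lambda>j. if j \<in> {1..N} then merge t w v (t, j) else undefined) = v"
      using v by (auto simp: merge_def SS_def PiE_def extensional_def)
    ultimately show "(\<lambda>w'. (\<lambda>(r, j). if r = t then undefined else w' (r, j), \<lambda>j. if j \<in> {1..N} then w' (t, j) else undefined))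
        ((\<lambda>(w, v). merge t w v) a) = a" using av by auto
  qed
  show "\<forall>a'\<in>omega N (Suc t).
       (\<lambda>(w, v). merge t w v)
        ((\<lambda>w'. (\<lambda>(r, j). if r = t then undefined else w' (r, j), \<lambda>j. if j \<in> {1..N} then w' (t, j) else undefined)) a') = a'"
  proof
    fix w' assume w': "w' \<in> omega N (Suc t)"
    show "(\<lambda>(w, v). merge t w v)
        ((\<lambda>w'. (\<lambda>(r, j). if r = t then undefined else w' (r, j), \<lambda>j. if j \<in> {1..N} then w' (t, j) else undefined)) w') = w'"
      by (simp, rule ext, clarify) (use w' in \<open>auto simp: merge_def omega_def PiE_def extensional_def\<close>)
  qed
  show "(\<lambda>(w, v). merge t w v) ` (omega N t \<times> SS {1..N}) \<subseteq> omega N (Suc t)"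
    by (auto simp: merge_def omega_def SS_def PiE_def extensional_def)
  show "(\<lambda>w'. (\<lambda>(r, j). if r = t then undefined else w' (r, j), \<lambda>j. if j \<in> {1..N} then w' (t, j) else undefined)) `
    omega N (Suc t) \<subseteq> omega N t \<times> SS {1..N}"
    by (auto simp: omega_def SS_def PiE_def extensional_def)
qed

lemma prob_ev_Suc:
  "prob_ev N lam p (Suc t) E =
     (\<Sum>v\<in>SS {1..N}. sw {1..N} lam p v * prob_ev N lam p t (\<lambda>w. E (merge t w v)))"
proof -
  have "prob_ev N lam p (Suc t) E =
     (\<Sum>x\<in>omega N t \<times> SS {1..N}. (\<lambda>w'. if E w' then weight N lam p (Suc t) w' else 0) ((\<lambda>(w,v). merge t w v) x))"
    unfolding prob_ev_def by (rule sum.reindex_bij_betw[symmetric, OF bij_merge])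
  also have "\<dots> = (\<Sum>w\<in>omega N t. \<Sum>v\<in>SS {1..N}. if E (merge t w v) then weight N lam p t w * sw {1..N} lam p v else 0)"
    by (subst sum.cartesian_product) (auto intro!: sum.cong simp: weight_Suc_merge)
  also have "\<dots> = (\<Sum>v\<in>SS {1..N}. \<Sum>w\<in>omega N t. if E (merge t w v) then weight N lam p t w * sw {1..N} lam p v else 0)"
    by (rule sum.swap)
  also have "\<dots> = (\<Sum>v\<in>SS {1..N}. sw {1..N} lam p v * prob_ev N lam p t (\<lambda>w. E (merge t w v)))"
    unfolding prob_ev_def by (simp add: sum_distrib_left mult.commute if_distrib cong: if_cong)
  finally show ?thesis .
qed


definition obsf :: "nat option \<Rightarrow> (nat \<Rightarrow> bool \<times> bool) \<Rightarrow> (nat \<Rightarrow> nat) \<Rightarrow> nat option" where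
  "obsf u v a = (case u of None \<Rightarrow> None | Some j \<Rightarrow> if snd (v j) then Some (a j) else None)"
definition nxt :: "(nat \<Rightarrow> bool \<times> bool) \<Rightarrow> (nat \<Rightarrow> nat) \<Rightarrow> nat \<Rightarrow> nat" where
  "nxt v a = (\<lambda>j. if fst (v j) then 1 else Suc (a j))"
definition kmstep :: "nat \<Rightarrow> nat \<times> nat \<Rightarrow> nat option \<times> nat option \<Rightarrow> nat \<times> nat" where
  "kmstep i c e = (if fst e = Some i \<and> snd e \<noteq> None then (max (the (snd e)) 1, 1) else (fst c, Suc (snd c)))"
definition km :: "nat \<Rightarrow> history \<Rightarrow> nat \<times> nat" where
  "km i h = foldl (kmstep i) (1,0) h"

lemma dloc_pos: "dloc w j r \<ge> 1"
  by (induction r) auto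

lemma dloc_agree: "\<forall>s<r. \<forall>j. w (s,j) = w' (s,j) \<Longrightarrow> dloc w j r = dloc w' j r"
  by (induction r) auto

lemma hist_agree: "\<forall>s<r. \<forall>j. w (s,j) = w' (s,j) \<Longrightarrow> hist pol w r = hist pol w' r"
proof (induction r)
  case 0 then show ?case by simp
next
  case (Suc r)
  then have h: "hist pol w r = hist pol w' r" by auto
  have "\<And>j. dloc w j r = dloc w' j r" using Suc.prems by (intro dloc_agree) auto
  then show ?case using h Suc.prems by (simp add: Let_def split: option.split)
qed

lemma merge_agree: "\<forall>s<t. \<forall>j. merge t w v (s,j) = w (s,j)"
  by (auto simp: merge_def)

lemma dloc_merge_t: "dloc (merge t w v) j t = dloc w j t"
  using dloc_agree[OF merge_agree] .

lemma hist_merge_t: "hist pol (merge t w v) t = hist pol w t"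
  using hist_agree[OF merge_agree] .

lemma dloc_merge: "dloc (merge t w v) j (Suc t) = (if fst (v j) then 1 else Suc (dloc w j t))"
  by (simp add: dloc_merge_t) (simp add: merge_def)

lemma hist_merge: "hist pol (merge t w v) (Suc t) =
   hist pol w t @ [(pol (hist pol w t), obsf (pol (hist pol w t)) v (\<lambda>j. dloc w j t))]"
  by (simp add: Let_def hist_merge_t dloc_merge_t obsf_def split: option.split) (simp add: merge_def)

lemma nxt_merge: "(\<lambda>j. dloc (merge t w v) j (Suc t)) = nxt v (\<lambda>j. dloc w j t)"
  by (rule ext) (simp only: dloc_merge nxt_def)

lemma nxt_msk: "(nxt v (a(i:=z)))(i:=z') = (nxt v a)(i:=z')"
  by (rule ext) (simp add: nxt_def)

lemma nxt_upd: "(nxt (v(i:=x)) a)(i:=z') = (nxt v a)(i:=z')"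
  by (rule ext) (simp add: nxt_def)

lemma obsf_msk: "\<not> (u0 = Some i \<and> o0 \<noteq> None) \<Longrightarrow> (o0 = obsf u0 v (a(i:=z))) = (o0 = obsf u0 v a)"
  by (cases u0) (auto simp: obsf_def)

lemma obsf_upd: "obsf u0 (v(i:=(bx,by))) a = obsf u0 (v(i:=(bz,by))) a"
  by (cases u0) (auto simp: obsf_def)

lemma prob_ev_const: "prob_ev N lam p t (\<lambda>w. c \<and> F w) = (if c then 1 else 0) * prob_ev N lam p t F"
  by (simp add: prob_ev_def)

lemma prob_ev_False: "prob_ev N lam p t (\<lambda>w. False) = 0"
  by (simp add: prob_ev_def)

lemma bij_split:
  assumes "i \<in> A"
  shows "bij_betw (\<lambda>(a,v'). v'(i:=a)) (UNIV \<times> SS (A - {i})) (SS A)"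
proof (rule bij_betw_byWitness[where f'="\<lambda>v. (v i, v(i:=undefined))"])
  show "\<forall>a\<in>UNIV \<times> SS (A - {i}). (\<lambda>v. (v i, v(i := undefined))) ((\<lambda>(a, v'). v'(i := a)) a) = a"
    by (auto simp: SS_def PiE_def extensional_def fun_eq_iff)
  show "\<forall>a'\<in>SS A. (\<lambda>(a, v'). v'(i := a)) ((\<lambda>v. (v i, v(i := undefined))) a') = a'"
    by auto
  show "(\<lambda>(a, v'). v'(i := a)) ` (UNIV \<times> SS (A - {i})) \<subseteq> SS A"
    using assms by (auto simp: SS_def PiE_def extensional_def)
  show "(\<lambda>v. (v i, v(i := undefined))) ` SS A \<subseteq> UNIV \<times> SS (A - {i})"
    by (auto simp: SS_def PiE_def extensional_def)
qed

lemma sum_split: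
  assumes "i \<in> A" "finite A"
  shows "(\<Sum>v\<in>SS A. sw A lam p v * F v) =
    (\<Sum>v'\<in>SS (A - {i}). sw (A - {i}) lam p v' * (\<Sum>a\<in>UNIV. fw lam p i a * F (v'(i:=a))))"
proof -
  have "(\<Sum>v\<in>SS A. sw A lam p v * F v) =
     (\<Sum>x\<in>UNIV \<times> SS (A - {i}). (\<lambda>v. sw A lam p v * F v) ((\<lambda>(a,v'). v'(i:=a)) x))"
    by (rule sum.reindex_bij_betw[symmetric, OF bij_split[OF assms(1)]])
  also have "\<dots> = (\<Sum>a\<in>UNIV. \<Sum>v'\<in>SS (A - {i}). fw lam p i a * sw (A - {i}) lam p v' * F (v'(i:=a)))"
  proof -
    have "\<And>a v'. sw A lam p (v'(i:=a)) = fw lam p i a * sw (A - {i}) lam p v'"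
    proof -
      fix a v'
      have "sw A lam p (v'(i:=a)) = fw lam p i a * (\<Prod>j\<in>A - {i}. fw lam p j ((v'(i:=a)) j))"
        unfolding sw_def using prod.remove[OF assms(2) assms(1), of "\<lambda>j. fw lam p j ((v'(i:=a)) j)"] by simp
      also have "(\<Prod>j\<in>A - {i}. fw lam p j ((v'(i:=a)) j)) = sw (A - {i}) lam p v'"
        unfolding sw_def by (rule prod.cong) auto
      finally show "sw A lam p (v'(i:=a)) = fw lam p i a * sw (A - {i}) lam p v'" .
    qed
    then have "(\<Sum>x\<in>UNIV \<times> SS (A - {i}). (\<lambda>v. sw A lam p v * F v) ((\<lambda>(a,v'). v'(i:=a)) x))
       = (\<Sum>(a,v')\<in>UNIV \<times> SS (A - {i}). fw lam p i a * sw (A - {i}) lam p v' * F (v'(i:=a)))"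
      by (intro sum.cong) auto
    then show ?thesis by (simp only: sum.cartesian_product)
  qed
  also have "\<dots> = (\<Sum>v'\<in>SS (A - {i}). \<Sum>a\<in>UNIV. fw lam p i a * sw (A - {i}) lam p v' * F (v'(i:=a)))"
    by (rule sum.swap)
  also have "\<dots> = (\<Sum>v'\<in>SS (A - {i}). sw (A - {i}) lam p v' * (\<Sum>a\<in>UNIV. fw lam p i a * F (v'(i:=a))))"
    by (simp add: sum_distrib_left mult_ac)
  finally show ?thesis .
qed

lemma UNIV_bb: "(UNIV :: (bool \<times> bool) set) = {(True,True),(True,False),(False,True),(False,False)}"
  by (auto simp: UNIV_Times_UNIV[symmetric] UNIV_bool simp del: UNIV_Times_UNIV)

lemma sum_bb: "(\<Sum>a\<in>(UNIV :: (bool \<times> bool) set). g a) = g (True,True) + g (True,False) + g (False,True) + g (False,False)"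
  by (simp add: UNIV_bb add.assoc)


lemma cvec_step:
  assumes "k \<ge> 1"
  shows "lam i * (if d = 1 then 1 else 0) + (1 - lam i) * (if d \<ge> 1 then cvec lam i k m (d-1) else 0)
       = cvec lam i k (Suc m) d"
proof (cases "d = 0")
  case True then show ?thesis using assms by (simp add: cvec_def)
next
  case False
  show ?thesis
  proof (cases "d = 1")
    case True then show ?thesis using assms by (simp add: cvec_def)
  next
    case d1: False
    then obtain e where e: "d = Suc (Suc e)" using False by (metis One_nat_def not0_implies_Suc)
    show ?thesis using assms by (auto simp: cvec_def e)
  qed
qed

lemma cvec_one: "x \<ge> 1 \<Longrightarrow> cvec lam i x 1 d = (if d = 1 then lam i else if d = Suc x then 1 - lam i else 0)"
  by (auto simp: cvec_def)

lemma alg4: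
  fixes l q cT cF X1 X2 :: real
  shows "(l*q)*(cT*X1) + (l*(1-q))*(cT*X2) + ((1-l)*q)*(cF*X1) + ((1-l)*(1-q))*(cF*X2)
     = (l*cT + (1-l)*cF) * ((l*q)*X1 + (l*(1-q))*X2 + ((1-l)*q)*X1 + ((1-l)*(1-q))*X2)"
  by algebra

lemma km_snoc: "km i (h @ [e]) = kmstep i (km i h) e"
  by (simp add: km_def)


lemma km_pos: "fst (km i h) \<ge> 1"
proof (induction h rule: rev_induct)
  case Nil then show ?case by (simp add: km_def)
next
  case (snoc e h) then show ?case by (simp add: km_snoc kmstep_def)
qed

lemma main:
  assumes iN: "i \<in> {1..N}"
  shows "\<forall>h Q d. prob_ev N lam p t (\<lambda>w. dloc w i t = d \<and> hist pol w t = h \<and> Q ((\<lambda>j. dloc w j t)(i := 0)))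
      = cvec lam i (fst (km i h)) (snd (km i h)) d *
        prob_ev N lam p t (\<lambda>w. hist pol w t = h \<and> Q ((\<lambda>j. dloc w j t)(i := 0)))"
proof (induction t)
  case 0
  have om: "omega N 0 = {\<lambda>_. undefined}" by (simp add: omega_def)
  show ?case
  proof (intro allI)
    fix h Q d
    let ?c = "(\<lambda>j. dloc (\<lambda>_. undefined) j 0)(i := 0)"
    have a: "prob_ev N lam p 0 (\<lambda>w. dloc w i 0 = d \<and> hist pol w 0 = h \<and> Q ((\<lambda>j. dloc w j 0)(i := 0)))
       = (if d = 1 \<and> h = [] \<and> Q ?c then 1 else 0)"
      unfolding prob_ev_def om by (auto simp: weight_def)
    have b: "prob_ev N lam p 0 (\<lambda>w. hist pol w 0 = h \<and> Q ((\<lambda>j. dloc w j 0)(i := 0)))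
       = (if h = [] \<and> Q ?c then 1 else 0)"
      unfolding prob_ev_def om by (simp add: weight_def)
    show "prob_ev N lam p 0 (\<lambda>w. dloc w i 0 = d \<and> hist pol w 0 = h \<and> Q ((\<lambda>j. dloc w j 0)(i := 0)))
      = cvec lam i (fst (km i h)) (snd (km i h)) d *
        prob_ev N lam p 0 (\<lambda>w. hist pol w 0 = h \<and> Q ((\<lambda>j. dloc w j 0)(i := 0)))"
      unfolding a b by (auto simp: km_def cvec_def)
  qed
next
  case (Suc t)
  show ?case
  proof (intro allI)
    fix h' Q d
    show "prob_ev N lam p (Suc t) (\<lambda>w. dloc w i (Suc t) = d \<and> hist pol w (Suc t) = h' \<and> Q ((\<lambda>j. dloc w j (Suc t))(i := 0)))
      = cvec lam i (fst (km i h')) (snd (km i h')) d *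
        prob_ev N lam p (Suc t) (\<lambda>w. hist pol w (Suc t) = h' \<and> Q ((\<lambda>j. dloc w j (Suc t))(i := 0)))"
    proof (cases h' rule: rev_exhaust)
      case Nil
      then show ?thesis by (simp add: Let_def prob_ev_False)
    next
      case (snoc h e)
      obtain u0 o0 where e: "e = (u0,o0)" by (cases e)
      show ?thesis
      proof (cases "pol h = u0")
        case False
        then have "\<And>w. hist pol w (Suc t) \<noteq> h'" by (auto simp: snoc e Let_def)
        then show ?thesis by (simp add: prob_ev_False)
      next
        case True
        have ev: "\<And>w v. (dloc (merge t w v) i (Suc t) = d \<and> hist pol (merge t w v) (Suc t) = h' \<and>
                Q ((\<lambda>j. dloc (merge t w v) j (Suc t))(i := 0))) =
            ((if fst (v i) then 1 else Suc (dloc w i t)) = d \<and> hist pol w t = h \<and>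
              o0 = obsf u0 v (\<lambda>j. dloc w j t) \<and> Q ((nxt v (\<lambda>j. dloc w j t))(i:=0)))"
          unfolding nxt_merge unfolding hist_merge dloc_merge using True by (auto simp: snoc e)
        have ev': "\<And>w v. (hist pol (merge t w v) (Suc t) = h' \<and>
                Q ((\<lambda>j. dloc (merge t w v) j (Suc t))(i := 0))) =
            (hist pol w t = h \<and> o0 = obsf u0 v (\<lambda>j. dloc w j t) \<and> Q ((nxt v (\<lambda>j. dloc w j t))(i:=0)))"
          unfolding nxt_merge unfolding hist_merge dloc_merge using True by (auto simp: snoc e)
        have num: "prob_ev N lam p (Suc t) (\<lambda>w. dloc w i (Suc t) = d \<and> hist pol w (Suc t) = h' \<and> Q ((\<lambda>j. dloc w j (Suc t))(i := 0)))
          = (\<Sum>v\<in>SS {1..N}. sw {1..N} lam p v * prob_ev N lam p t (\<lambda>w. (if fst (v i) then 1 else Suc (dloc w i t)) = d \<and> hist pol w t = h \<and>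
              o0 = obsf u0 v (\<lambda>j. dloc w j t) \<and> Q ((nxt v (\<lambda>j. dloc w j t))(i:=0))))"
          by (simp only: prob_ev_Suc ev)
        have den: "prob_ev N lam p (Suc t) (\<lambda>w. hist pol w (Suc t) = h' \<and> Q ((\<lambda>j. dloc w j (Suc t))(i := 0)))
          = (\<Sum>v\<in>SS {1..N}. sw {1..N} lam p v * prob_ev N lam p t (\<lambda>w. hist pol w t = h \<and>
              o0 = obsf u0 v (\<lambda>j. dloc w j t) \<and> Q ((nxt v (\<lambda>j. dloc w j t))(i:=0))))"
          by (simp only: prob_ev_Suc ev')
        have fin: "finite {1..N}" by simp
        have kmh': "km i h' = kmstep i (km i h) (u0,o0)" by (simp add: snoc e km_snoc)
        let ?ev = "\<lambda>v w. (if fst (v i) then 1 else Suc (dloc w i t)) = d \<and> hist pol w t = h \<and>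
              o0 = obsf u0 v (\<lambda>j. dloc w j t) \<and> Q ((nxt v (\<lambda>j. dloc w j t))(i:=0))"
        let ?ev' = "\<lambda>v w. hist pol w t = h \<and>
              o0 = obsf u0 v (\<lambda>j. dloc w j t) \<and> Q ((nxt v (\<lambda>j. dloc w j t))(i:=0))"
        let ?SS' = "SS ({1..N} - {i})"
        let ?sw' = "sw ({1..N} - {i}) lam p"
        show ?thesis
        proof (cases "u0 = Some i \<and> o0 \<noteq> None")
          case True
          then obtain x where ux: "u0 = Some i" "o0 = Some x" by auto
          have kmA: "km i h' = (max x 1, 1)" by (simp add: kmh' kmstep_def ux)
          define Y where "Y v = prob_ev N lam p t (\<lambda>w. dloc w i t = x \<and> hist pol w t = h \<and> Q ((nxt v (\<lambda>j. dloc w j t))(i:=0)))" for v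
          have numv: "prob_ev N lam p t (?ev v) = (if snd (v i) \<and> (if fst (v i) then d = 1 else d = Suc x) then 1 else 0) * Y v" for v
          proof -
            have "prob_ev N lam p t (?ev v) = prob_ev N lam p t (\<lambda>w. (snd (v i) \<and> (if fst (v i) then d = 1 else d = Suc x)) \<and>
               (dloc w i t = x \<and> hist pol w t = h \<and> Q ((nxt v (\<lambda>j. dloc w j t))(i:=0))))"
              by (rule arg_cong[where f="prob_ev N lam p t"], rule ext) (auto simp: ux obsf_def)
            then show ?thesis by (simp only: prob_ev_const Y_def)
          qed
          have denv: "prob_ev N lam p t (?ev' v) = (if snd (v i) then 1 else 0) * Y v" for v
          proof -
            have "prob_ev N lam p t (?ev' v) = prob_ev N lam p t (\<lambda>w. snd (v i) \<and>
               (dloc w i t = x \<and> hist pol w t = h \<and> Q ((nxt v (\<lambda>j. dloc w j t))(i:=0))))"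
              by (rule arg_cong[where f="prob_ev N lam p t"], rule ext) (auto simp: ux obsf_def)
            then show ?thesis by (simp only: prob_ev_const Y_def)
          qed
          have Yupd: "Y (v(i:=a)) = Y v" for v a by (simp add: Y_def nxt_upd)
          have Y0: "Y v = 0" if "x = 0" for v
          proof -
            have z: "\<And>w. (dloc w i t = 0) = False" using dloc_pos by (metis not_one_le_zero)
            show ?thesis using that by (simp only: Y_def z simp_thms prob_ev_False)
          qed
          have inner: "(\<Sum>a\<in>UNIV. fw lam p i a * ((if snd ((v'(i:=a)) i) \<and> (if fst ((v'(i:=a)) i) then d = 1 else d = Suc x) then 1 else 0) * Y (v'(i:=a))))
             = cvec lam i (max x 1) 1 d * (\<Sum>a\<in>UNIV. fw lam p i a * ((if snd ((v'(i:=a)) i) then 1 else 0) * Y (v'(i:=a))))" for v'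
          proof (cases "x = 0")
            case True then show ?thesis by (simp add: Y0)
          next
            case False
            then have mx: "max x 1 = x" and x1: "x \<ge> 1" by auto
            show ?thesis unfolding mx cvec_one[OF x1] using x1 by (simp add: sum_bb Yupd fw_def algebra_simps)
          qed
          have "prob_ev N lam p (Suc t) (\<lambda>w. dloc w i (Suc t) = d \<and> hist pol w (Suc t) = h' \<and> Q ((\<lambda>j. dloc w j (Suc t))(i := 0)))
             = (\<Sum>v'\<in>?SS'. ?sw' v' * (cvec lam i (max x 1) 1 d * (\<Sum>a\<in>UNIV. fw lam p i a * ((if snd ((v'(i:=a)) i) then 1 else 0) * Y (v'(i:=a))))))"
            by (simp only: num numv sum_split[OF iN fin] inner)
          also have "\<dots> = cvec lam i (max x 1) 1 d * (\<Sum>v'\<in>?SS'. ?sw' v' * (\<Sum>a\<in>UNIV. fw lam p i a * ((if snd ((v'(i:=a)) i) then 1 else 0) * Y (v'(i:=a)))))"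
            by (simp add: sum_distrib_left mult_ac)
          also have "\<dots> = cvec lam i (fst (km i h')) (snd (km i h')) d *
              prob_ev N lam p (Suc t) (\<lambda>w. hist pol w (Suc t) = h' \<and> Q ((\<lambda>j. dloc w j (Suc t))(i := 0)))"
            by (simp only: den denv sum_split[OF iN fin] kmA fst_conv snd_conv)
          finally show ?thesis .
        next
          case B: False
          have kmB: "km i h' = (fst (km i h), Suc (snd (km i h)))" using B unfolding kmh' kmstep_def by auto
          define k where "k = fst (km i h)"
          define m where "m = snd (km i h)"
          have k1: "k \<ge> 1" using km_pos k_def by simp
          define Q2 where "Q2 v b = (o0 = obsf u0 v b \<and> Q ((nxt v b)(i:=0)))" for v b
          define X where "X v = prob_ev N lam p t (\<lambda>w. hist pol w t = h \<and> Q2 v ((\<lambda>j. dloc w j t)(i := 0)))" for v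
          have eqQ: "(o0 = obsf u0 v (\<lambda>j. dloc w j t) \<and> Q ((nxt v (\<lambda>j. dloc w j t))(i:=0))) = Q2 v ((\<lambda>j. dloc w j t)(i := 0))" for v w
            unfolding Q2_def using obsf_msk[OF B] nxt_msk by simp
          have numv: "prob_ev N lam p t (?ev v) = (if fst (v i) then (if d = 1 then 1 else 0) else (if d \<ge> 1 then cvec lam i k m (d-1) else 0)) * X v" for v
          proof (cases "fst (v i)")
            case True
            have "prob_ev N lam p t (?ev v) = prob_ev N lam p t (\<lambda>w. d = 1 \<and> (hist pol w t = h \<and> Q2 v ((\<lambda>j. dloc w j t)(i := 0))))"
              by (rule arg_cong[where f="prob_ev N lam p t"], rule ext) (auto simp: True eqQ)
            then show ?thesis using True by (simp only: prob_ev_const X_def) simp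
          next
            case False
            show ?thesis
            proof (cases "d = 0")
              case True
              have "prob_ev N lam p t (?ev v) = prob_ev N lam p t (\<lambda>w. False)"
                by (rule arg_cong[where f="prob_ev N lam p t"], rule ext) (auto simp: True False)
              then show ?thesis using True False by (simp add: prob_ev_False)
            next
              case d0: False
              have "prob_ev N lam p t (?ev v) = prob_ev N lam p t (\<lambda>w. dloc w i t = d - 1 \<and> hist pol w t = h \<and> Q2 v ((\<lambda>j. dloc w j t)(i := 0)))"
                by (rule arg_cong[where f="prob_ev N lam p t"], rule ext) (use d0 in \<open>auto simp: False eqQ\<close>)
              also have "\<dots> = cvec lam i k m (d-1) * X v"
                unfolding X_def k_def m_def by (rule Suc.IH[rule_format])
              finally show ?thesis using False d0 by simp
            qed
          qed
          have denv: "prob_ev N lam p t (?ev' v) = X v" for v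
            unfolding X_def by (rule arg_cong[where f="prob_ev N lam p t"], rule ext) (simp add: eqQ)
          have Xupd: "X (v(i:=(True,b))) = X (v(i:=(False,b)))" for v b
            by (simp add: X_def Q2_def nxt_upd obsf_upd[where bx=True and bz=False])
          have inner: "(\<Sum>a\<in>UNIV. fw lam p i a * ((if fst ((v'(i:=a)) i) then (if d = 1 then 1 else 0) else (if d \<ge> 1 then cvec lam i k m (d-1) else 0)) * X (v'(i:=a))))
             = cvec lam i k (Suc m) d * (\<Sum>a\<in>UNIV. fw lam p i a * X (v'(i:=a)))" for v'
          proof -
            have "cvec lam i k (Suc m) d = lam i * (if d = 1 then 1 else 0) + (1 - lam i) * (if d \<ge> 1 then cvec lam i k m (d-1) else 0)"
              using cvec_step[OF k1] by simp
            then show ?thesis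
              by (simp only: sum_bb fw_def fun_upd_same fst_conv snd_conv if_True if_False Xupd alg4 mult_1_left mult_1_right)
          qed
          have "prob_ev N lam p (Suc t) (\<lambda>w. dloc w i (Suc t) = d \<and> hist pol w (Suc t) = h' \<and> Q ((\<lambda>j. dloc w j (Suc t))(i := 0)))
             = (\<Sum>v'\<in>?SS'. ?sw' v' * (cvec lam i k (Suc m) d * (\<Sum>a\<in>UNIV. fw lam p i a * X (v'(i:=a)))))"
            by (simp only: num numv sum_split[OF iN fin] inner)
          also have "\<dots> = cvec lam i k (Suc m) d * (\<Sum>v'\<in>?SS'. ?sw' v' * (\<Sum>a\<in>UNIV. fw lam p i a * X (v'(i:=a))))"
            by (simp add: sum_distrib_left mult_ac)
          also have "\<dots> = cvec lam i (fst (km i h')) (snd (km i h')) d *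
              prob_ev N lam p (Suc t) (\<lambda>w. hist pol w (Suc t) = h' \<and> Q ((\<lambda>j. dloc w j (Suc t))(i := 0)))"
            by (simp only: den denv sum_split[OF iN fin] kmB fst_conv snd_conv k_def m_def)
          finally show ?thesis .
        qed
      qed
    qed
  qed
qed

lemma Dap_km: "Dap pol w i t = fst (km i (hist pol w t)) + snd (km i (hist pol w t))"
proof (induction t)
  case 0 then show ?case by (simp add: km_def)
next
  case (Suc t)
  have "dloc w i t \<ge> 1" by (rule dloc_pos)
  then show ?case using Suc by (auto simp: Let_def km_snoc kmstep_def split: option.split)
qed

lemma hist_ne: "hist pol w (Suc t) \<noteq> []"
  by (simp add: Let_def)

lemma km_snd_pos: "h \<noteq> [] \<Longrightarrow> snd (km i h) \<ge> 1"
  by (cases h rule: rev_exhaust) (auto simp: km_snoc kmstep_def)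

lemma weight_nonneg:
  assumes "\<forall>j\<in>{1..N}. 0 < lam j \<and> lam j \<le> 1" "\<forall>j\<in>{1..N}. 0 < p j \<and> p j \<le> 1"
  shows "weight N lam p t w \<ge> 0"
  unfolding weight_def using assms by (intro prod_nonneg mult_nonneg_nonneg) (auto simp: less_imp_le)

theorem corollary1:
  fixes N :: nat and lam p :: "nat \<Rightarrow> real" and pol :: policy
    and t i :: nat and w0 :: config
  assumes "\<forall>j\<in>{1..N}. 0 < lam j \<and> lam j \<le> 1"
    and "\<forall>j\<in>{1..N}. 0 < p j \<and> p j \<le> 1"
    and "\<forall>h. pol h = None \<or> (\<exists>j\<in>{1..N}. pol h = Some j)"
    and "t \<ge> 1" and "i \<in> {1..N}"
    and "w0 \<in> omega N t" and "weight N lam p t w0 > 0"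
  shows "\<exists>k m :: nat. k > 0 \<and> m > 0 \<and> Dap pol w0 i t = k + m \<and>
           (\<forall>d \<ge> 1. belief N lam p pol t i (hist pol w0 t) d = cvec lam i k m d)"
proof -
  define h where "h = hist pol w0 t"
  define k where "k = fst (km i h)"
  define m where "m = snd (km i h)"
  have k0: "k > 0" using km_pos[of i h] k_def by simp
  obtain t' where "t = Suc t'" using assms(4) by (cases t) auto
  then have "h \<noteq> []" unfolding h_def using hist_ne by simp
  then have m0: "m > 0" using km_snd_pos[of h i] m_def by simp
  have D: "Dap pol w0 i t = k + m" using Dap_km k_def m_def h_def by simp
  have den: "prob_ev N lam p t (\<lambda>w. hist pol w t = h) > 0"
  proof -
    have "weight N lam p t w0 \<le> (\<Sum>w\<in>omega N t. if hist pol w t = h then weight N lam p t w else 0)"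
      using member_le_sum[OF assms(6), of "\<lambda>w. if hist pol w t = h then weight N lam p t w else 0"]
        weight_nonneg[OF assms(1,2)] finite_omega h_def by simp
    then show ?thesis using assms(7) unfolding prob_ev_def by linarith
  qed
  have "belief N lam p pol t i h d = cvec lam i k m d" for d
  proof -
    have "prob_ev N lam p t (\<lambda>w. dloc w i t = d \<and> hist pol w t = h) = cvec lam i k m d * prob_ev N lam p t (\<lambda>w. hist pol w t = h)"
      using main[where t=t and lam=lam and p=p and pol=pol, OF assms(5), rule_format, of d h "\<lambda>_. True"] k_def m_def by simp
    then show ?thesis unfolding belief_def using den by simp
  qed
  then show ?thesis using k0 m0 D h_def by blast
qed
end
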